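(* Let $V$ and $Y$ be left and right canonical matrices, respectively, for $T$ at $\lambda_0$. Then $\Delta^{-1}VTY$ and $VTY\Delta^{-1}$ both belong to $\mathcal{H}_0^{r\times r}$ and are unimodular.
   Context: Let $\Omega\subset\mathbb{C}$ be open and $\lambda_0\in\Omega$ fixed. $\mathcal{H}$ denotes the ring of holomorphic functions on $\Omega$, and $\mathcal{H}_0$ the ring of functions holomorphic in some neighborhood of $\lambda_0$. Write $\chi_0(\lambda)=\lambda-\lambda_0$. A matrix $M\in\mathcal{H}_0^{n\times n}$ is unimodular if it has an inverse in $\mathcal{H}_0^{n\times n}$ (equivalently, $M(\lambda_0)$ is nonsingular). Throughout, $T\in\mathcal{H}^{n\times n}$ with $\det T$ not identically zero and $\det T(\lambda_0)=0$, and $r=\dim\ker T(\lambda_0)$. There exist unimodular $U_L,U_R\in\mathcal{H}_0^{n\times n}$ and uniquely determined integers $m_1\ge\cdots\ge m_n\ge 0$ (the partial multiplicities) with $U_LTU_R=\mathrm{diag}(\chi_0^{m_1},\dots,\chi_0^{m_n})$; $m_i>0$ exactly for $i\le r$. Set $\Delta=\mathrm{diag}(\chi_0^{m_1},\dots,\chi_0^{m_r})$. A root function for $T$ at $\lambda_0$ is $y\in\mathcal{H}^n$ with $y(\lambda_0)\neq0$ and $T(\lambda_0)y(\lambda_0)=0$; its multiplicity $\nu(y)$ is the order of the zero of $Ty$ at $\lambda_0$. A right canonical matrix for $T$ at $\lambda_0$ is $Y\in\mathcal{H}^{n\times r}$ whose columns $y_1,\dots,y_r$ are root functions such that (a) $y_1(\lambda_0),\dots,y_r(\lambda_0)$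 are linearly independent, (b) $\sum_{i=1}^r\nu(y_i)=\sum_{i=1}^r m_i$, (c) $\nu(y_1)\ge\cdots\ge\nu(y_r)$. A left root function is a row vector $v\in\mathcal{H}^{1\times n}$ with $v(\lambda_0)\ne0$ and $v(\lambda_0)T(\lambda_0)=0$, with multiplicity the order of the zero of $vT$ at $\lambda_0$; a left canonical matrix $V\in\mathcal{H}^{r\times n}$ is defined analogously. *)

theory Defs
  imports "HOL-Analysis.Analysis" "Jordan_Normal_Form.Matrix_Kernel" "Jordan_Normal_Form.Determinant"
begin

definition mat_holo :: "complex set \<Rightarrow> nat \<Rightarrow> nat \<Rightarrow> (complex \<Rightarrow> complex mat) \<Rightarrow> bool" where
  "mat_holo S nr nc M \<longleftrightarrow> (\<forall>z\<in>S. M z \<in> carrier_mat nr nc) \<and>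
     (\<forall>i<nr. \<forall>j<nc. (\<lambda>z. M z $$ (i,j)) holomorphic_on S)"

definition vec_holo :: "complex set \<Rightarrow> nat \<Rightarrow> (complex \<Rightarrow> complex vec) \<Rightarrow> bool" where
  "vec_holo S n v \<longleftrightarrow> (\<forall>z\<in>S. v z \<in> carrier_vec n) \<and>
     (\<forall>i<n. (\<lambda>z. v z $ i) holomorphic_on S)"

text \<open>M is an n x n matrix in H_0 (holomorphic on some neighbourhood of lam0) having an
  inverse in H_0.\<close>
definition unimodular0 :: "complex \<Rightarrow> nat \<Rightarrow> (complex \<Rightarrow> complex mat) \<Rightarrow> bool" where
  "unimodular0 lam0 n M \<longleftrightarrow> (\<exists>U. open U \<and> lam0 \<in> U \<and> mat_holo U n n M \<and>
     (\<exists>M'. mat_holo U n n M' \<and> (\<forall>z\<in>U. M z * M' z = 1\<^sub>m n \<and> M' z * M z = 1\<^sub>m n)))"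

text \<open>diag(chi_0^{m_1},...,chi_0^{m_k}) at the point z, and its inverse (z ~= lam0).\<close>
definition Delta :: "complex \<Rightarrow> nat list \<Rightarrow> nat \<Rightarrow> complex \<Rightarrow> complex mat" where
  "Delta lam0 ms k z = mat k k (\<lambda>(i,j). if i = j then (z - lam0) ^ (ms ! i) else 0)"

definition Delta_inv :: "complex \<Rightarrow> nat list \<Rightarrow> nat \<Rightarrow> complex \<Rightarrow> complex mat" where
  "Delta_inv lam0 ms k z = mat k k (\<lambda>(i,j). if i = j then 1 / (z - lam0) ^ (ms ! i) else 0)"

text \<open>ms = [m_1,...,m_n] are the partial multiplicities of T at lam0 (0-based list).\<close>
definition partial_mults :: "complex set \<Rightarrow> nat \<Rightarrow> (complex \<Rightarrow> complex mat) \<Rightarrow> complex \<Rightarrow> nat list \<Rightarrow> bool" where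
  "partial_mults \<Omega> n T lam0 ms \<longleftrightarrow> length ms = n \<and> sorted_wrt (\<ge>) ms \<and>
     (\<exists>UL UR. unimodular0 lam0 n UL \<and> unimodular0 lam0 n UR \<and>
       (\<exists>U. open U \<and> lam0 \<in> U \<and> (\<forall>z\<in>U \<inter> \<Omega>. UL z * T z * UR z = Delta lam0 ms n z)))"

definition zero_order :: "complex set \<Rightarrow> nat \<Rightarrow> (complex \<Rightarrow> complex vec) \<Rightarrow> complex \<Rightarrow> nat \<Rightarrow> bool" where
  "zero_order \<Omega> n f lam0 k \<longleftrightarrow> (\<exists>U g. open U \<and> lam0 \<in> U \<and> U \<subseteq> \<Omega> \<and> vec_holo U n g \<and>
     g lam0 \<noteq> 0\<^sub>v n \<and> (\<forall>z\<in>U. f z = ((z - lam0) ^ k) \<cdot>\<^sub>v g z))"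

definition root_function :: "complex set \<Rightarrow> nat \<Rightarrow> (complex \<Rightarrow> complex mat) \<Rightarrow> complex \<Rightarrow> (complex \<Rightarrow> complex vec) \<Rightarrow> bool" where
  "root_function \<Omega> n T lam0 y \<longleftrightarrow> vec_holo \<Omega> n y \<and> y lam0 \<noteq> 0\<^sub>v n \<and> T lam0 *\<^sub>v y lam0 = 0\<^sub>v n"

definition root_mult :: "complex set \<Rightarrow> nat \<Rightarrow> (complex \<Rightarrow> complex mat) \<Rightarrow> complex \<Rightarrow> (complex \<Rightarrow> complex vec) \<Rightarrow> nat \<Rightarrow> bool" where
  "root_mult \<Omega> n T lam0 y k \<longleftrightarrow> zero_order \<Omega> n (\<lambda>z. T z *\<^sub>v y z) lam0 k"

text \<open>Left root function: row vector v (represented as a column vector) with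
  v(lam0) T(lam0) = 0; its multiplicity is the order of the zero of vT (= T^t v transposed).\<close>
definition left_root_function :: "complex set \<Rightarrow> nat \<Rightarrow> (complex \<Rightarrow> complex mat) \<Rightarrow> complex \<Rightarrow> (complex \<Rightarrow> complex vec) \<Rightarrow> bool" where
  "left_root_function \<Omega> n T lam0 v \<longleftrightarrow> vec_holo \<Omega> n v \<and> v lam0 \<noteq> 0\<^sub>v n \<and>
     transpose_mat (T lam0) *\<^sub>v v lam0 = 0\<^sub>v n"

definition left_root_mult :: "complex set \<Rightarrow> nat \<Rightarrow> (complex \<Rightarrow> complex mat) \<Rightarrow> complex \<Rightarrow> (complex \<Rightarrow> complex vec) \<Rightarrow> nat \<Rightarrow> bool" where
  "left_root_mult \<Omega> n T lam0 v k \<longleftrightarrow> zero_order \<Omega> n (\<lambda>z. transpose_mat (T z) *\<^sub>v v z) lam0 k"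

definition right_canonical :: "complex set \<Rightarrow> nat \<Rightarrow> (complex \<Rightarrow> complex mat) \<Rightarrow> complex \<Rightarrow> nat list \<Rightarrow> nat \<Rightarrow> (complex \<Rightarrow> complex mat) \<Rightarrow> bool" where
  "right_canonical \<Omega> n T lam0 ms r Y \<longleftrightarrow> mat_holo \<Omega> n r Y \<and>
     (\<forall>i<r. root_function \<Omega> n T lam0 (\<lambda>z. col (Y z) i)) \<and>
     (\<forall>c \<in> carrier_vec r. Y lam0 *\<^sub>v c = 0\<^sub>v n \<longrightarrow> c = 0\<^sub>v r) \<and>
     (\<exists>nus. length nus = r \<and> (\<forall>i<r. root_mult \<Omega> n T lam0 (\<lambda>z. col (Y z) i) (nus ! i)) \<and>
        (\<Sum>i<r. nus ! i) = (\<Sum>i<r. ms ! i) \<and> sorted_wrt (\<ge>) nus)"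

definition left_canonical :: "complex set \<Rightarrow> nat \<Rightarrow> (complex \<Rightarrow> complex mat) \<Rightarrow> complex \<Rightarrow> nat list \<Rightarrow> nat \<Rightarrow> (complex \<Rightarrow> complex mat) \<Rightarrow> bool" where
  "left_canonical \<Omega> n T lam0 ms r V \<longleftrightarrow> mat_holo \<Omega> r n V \<and>
     (\<forall>i<r. left_root_function \<Omega> n T lam0 (\<lambda>z. row (V z) i)) \<and>
     (\<forall>c \<in> carrier_vec r. transpose_mat (V lam0) *\<^sub>v c = 0\<^sub>v n \<longrightarrow> c = 0\<^sub>v r) \<and>
     (\<exists>nus. length nus = r \<and> (\<forall>i<r. left_root_mult \<Omega> n T lam0 (\<lambda>z. row (V z) i) (nus ! i)) \<and>
        (\<Sum>i<r. nus ! i) = (\<Sum>i<r. ms ! i) \<and> sorted_wrt (\<ge>) nus)"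

end

theory Submission
  imports Defs
begin

lemma mult_entry:
  assumes "A \<in> carrier_mat a b" "B \<in> carrier_mat b c" "i < a" "j < c"
  shows "(A * B) $$ (i,j) = (\<Sum>k<b. A $$ (i,k) * B $$ (k,j))"
  using assms by (auto simp: scalar_prod_def atLeast0LessThan intro!: sum.cong)

lemma holo_det:
  assumes "\<forall>z\<in>S. M z \<in> carrier_mat k k"
    and "\<forall>i<k. \<forall>j<k. (\<lambda>z. M z $$ (i,j)) holomorphic_on S"
  shows "(\<lambda>z. det (M z)) holomorphic_on S"
proof -
  have "(\<lambda>z. (\<Sum> p \<in> {p. p permutes {0 ..< k}}. signof p * (\<Prod> i = 0 ..< k. M z $$ (i, p i)))) holomorphic_on S"
  proof (intro holomorphic_intros)
    fix p i assume p: "p \<in> {p. p permutes {0 ..< k}}" and i: "i \<in> {0..<k}"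
    have "p i < k" using p i permutes_in_image by fastforce
    then show "(\<lambda>z. M z $$ (i, p i)) holomorphic_on S" using assms(2) i by auto
  qed
  then show ?thesis
  proof (rule holomorphic_transform)
    fix x assume "x \<in> S"
    then show "(\<Sum> p \<in> {p. p permutes {0 ..< k}}. signof p * (\<Prod> i = 0 ..< k. M x $$ (i, p i))) = det (M x)"
      using det_def'[of "M x" k] assms(1) by simp
  qed
qed

lemma mat_holo_subset: "mat_holo S a b M \<Longrightarrow> T \<subseteq> S \<Longrightarrow> mat_holo T a b M"
  unfolding mat_holo_def using holomorphic_on_subset by blast

lemma vec_holo_subset: "vec_holo S a M \<Longrightarrow> T \<subseteq> S \<Longrightarrow> vec_holo T a M"
  unfolding vec_holo_def using holomorphic_on_subset by blast

lemma mat_holo_mult: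
  assumes "mat_holo S a b A" "mat_holo S b c B"
  shows "mat_holo S a c (\<lambda>z. A z * B z)"
  unfolding mat_holo_def
proof (intro conjI allI impI ballI)
  fix z assume "z \<in> S" then show "A z * B z \<in> carrier_mat a c"
    using assms unfolding mat_holo_def by (meson mult_carrier_mat)
next
  fix i j assume ij: "i < a" "j < c"
  have "(\<lambda>z. \<Sum>k<b. A z $$ (i,k) * B z $$ (k,j)) holomorphic_on S"
    using assms ij unfolding mat_holo_def by (intro holomorphic_intros) auto
  then show "(\<lambda>z. (A z * B z) $$ (i, j)) holomorphic_on S"
  proof (rule holomorphic_transform)
    fix x assume "x \<in> S"
    then show "(\<Sum>k<b. A x $$ (i,k) * B x $$ (k,j)) = (A x * B x) $$ (i, j)"
      using mult_entry[of "A x" a b "B x" c i j] assms ij unfolding mat_holo_def by simp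
  qed
qed

lemma eq_at_point:
  fixes f g :: "complex \<Rightarrow> complex"
  assumes "open S" "a \<in> S" "continuous_on S f" "continuous_on S g"
    and "\<forall>z\<in>S - {a}. f z = g z"
  shows "f a = g a"
proof -
  have "(f \<longlongrightarrow> f a) (at a)" "(g \<longlongrightarrow> g a) (at a)"
    using assms continuous_on_eq_continuous_at isCont_def by blast+
  moreover have "eventually (\<lambda>z. f z = g z) (at a)"
    using assms(1,2,5) eventually_at_topological by blast
  ultimately have "(f \<longlongrightarrow> g a) (at a)"
    using tendsto_cong by (metis (mono_tags, lifting))
  then show ?thesis using \<open>(f \<longlongrightarrow> f a) (at a)\<close> tendsto_unique by (metis at_neq_bot)
qed

lemma inv_smult_one: "(d::complex) \<noteq> 0 \<Longrightarrow> (1/d) \<cdot>\<^sub>m (d \<cdot>\<^sub>m 1\<^sub>m k) = 1\<^sub>m k"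
  by (rule eq_matI) auto

lemma holo_entry_idx:
  assumes "\<forall>i<k. \<forall>j<k. (\<lambda>z. W z $$ (i,j)) holomorphic_on S" "a < k" "b < k"
  shows "(\<lambda>z. W z $$ (a,b)) holomorphic_on S"
  using assms by blast

lemma unimod_of_det:
  assumes S: "open S" "lam0 \<in> S" and W: "mat_holo S k k W" and d0: "det (W lam0) \<noteq> 0"
  shows "unimodular0 lam0 k W"
proof -
  have Wc: "\<forall>z\<in>S. W z \<in> carrier_mat k k" and Wh: "\<forall>i<k. \<forall>j<k. (\<lambda>z. W z $$ (i,j)) holomorphic_on S"
    using W unfolding mat_holo_def by auto
  have dh: "(\<lambda>z. det (W z)) holomorphic_on S" using holo_det[OF Wc Wh] .
  define S' where "S' = S \<inter> (\<lambda>z. det (W z)) -` (-{0})"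
  have oS': "open S'" unfolding S'_def
    by (rule continuous_open_preimage) (use holomorphic_on_imp_continuous_on[OF dh] S in auto)
  have lS': "lam0 \<in> S'" using S d0 unfolding S'_def by auto
  have sub: "S' \<subseteq> S" unfolding S'_def by auto
  have nz: "\<And>z. z \<in> S' \<Longrightarrow> det (W z) \<noteq> 0" unfolding S'_def by auto
  define M where "M z = (1 / det (W z)) \<cdot>\<^sub>m adj_mat (W z)" for z
  have Mc: "\<forall>z\<in>S'. M z \<in> carrier_mat k k" using Wc sub adj_mat(1) unfolding M_def by (metis smult_carrier_mat subsetD)
  have Mh: "\<forall>i<k. \<forall>j<k. (\<lambda>z. M z $$ (i,j)) holomorphic_on S'"
  proof (intro allI impI)
    fix i j assume ij: "i < k" "j < k"
    have dh': "(\<lambda>z. det (mat_delete (W z) j i)) holomorphic_on S'"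
    proof (rule holo_det[where k = "k - 1"])
      show "\<forall>z\<in>S'. mat_delete (W z) j i \<in> carrier_mat (k - 1) (k - 1)"
        using Wc sub mat_delete_carrier by blast
      show "\<forall>a<k - 1. \<forall>b<k - 1. (\<lambda>z. mat_delete (W z) j i $$ (a, b)) holomorphic_on S'"
      proof (intro allI impI)
        fix a b assume ab: "a < k - 1" "b < k - 1"
        define a' where "a' = (if a < j then a else Suc a)"
        define b' where "b' = (if b < i then b else Suc b)"
        have "a' < k" "b' < k" using ab unfolding a'_def b'_def by auto
        then have "(\<lambda>z. W z $$ (a',b')) holomorphic_on S'"
          using Wh sub holomorphic_on_subset by blast
        then show "(\<lambda>z. mat_delete (W z) j i $$ (a, b)) holomorphic_on S'"
        proof (rule holomorphic_transform)
          fix z assume "z \<in> S'"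
          then have "W z \<in> carrier_mat k k" using Wc sub by auto
          then show "W z $$ (a',b') = mat_delete (W z) j i $$ (a, b)"
            using ab unfolding mat_delete_def a'_def b'_def by auto
        qed
      qed
    qed
    have "(\<lambda>z. (1 / det (W z)) * ((-1)^(j+i) * det (mat_delete (W z) j i))) holomorphic_on S'"
      by (intro holomorphic_intros dh' holomorphic_on_subset[OF dh sub]) (use nz in auto)
    then show "(\<lambda>z. M z $$ (i,j)) holomorphic_on S'"
    proof (rule holomorphic_transform)
      fix z assume "z \<in> S'"
      then have "W z \<in> carrier_mat k k" using Wc sub by auto
      then show "(1 / det (W z)) * ((-1)^(j+i) * det (mat_delete (W z) j i)) = M z $$ (i,j)"
        using ij unfolding M_def adj_mat_def cofactor_def by auto
    qed
  qed
  have inv: "\<forall>z\<in>S'. W z * M z = 1\<^sub>m k \<and> M z * W z = 1\<^sub>m k"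
  proof
    fix z assume z: "z \<in> S'"
    have Wz: "W z \<in> carrier_mat k k" using Wc sub z by auto
    have "W z * M z = (1 / det (W z)) \<cdot>\<^sub>m (W z * adj_mat (W z))"
      unfolding M_def using mult_smult_distrib[OF Wz adj_mat(1)[OF Wz]] .
    also have "\<dots> = 1\<^sub>m k" using adj_mat(2)[OF Wz] inv_smult_one nz z by simp
    finally have 1: "W z * M z = 1\<^sub>m k" .
    have "M z * W z = (1 / det (W z)) \<cdot>\<^sub>m (adj_mat (W z) * W z)"
      unfolding M_def using mult_smult_assoc_mat[OF adj_mat(1)[OF Wz] Wz] .
    also have "\<dots> = 1\<^sub>m k" using adj_mat(3)[OF Wz] inv_smult_one nz z by simp
    finally show "W z * M z = 1\<^sub>m k \<and> M z * W z = 1\<^sub>m k" using 1 by simp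
  qed
  have "mat_holo S' k k M" unfolding mat_holo_def using Mc Mh by blast
  then show ?thesis unfolding unimodular0_def
    using oS' lS' mat_holo_subset[OF W sub] inv by blast
qed

lemma mv_entry:
  assumes "A \<in> carrier_mat a b" "v \<in> carrier_vec b" "i < a"
  shows "(A *\<^sub>v v) $ i = (\<Sum>k<b. A $$ (i,k) * v $ k)"
  using assms by (auto simp: scalar_prod_def atLeast0LessThan intro!: sum.cong)

lemma rank_arg:
  fixes A :: "complex mat"
  assumes A: "A \<in> carrier_mat r n" and k: "k < r"
    and z: "\<forall>i\<le>k. \<forall>j. k \<le> j \<longrightarrow> j < n \<longrightarrow> A $$ (i,j) = 0"
  shows "\<exists>c\<in>carrier_vec r. c \<noteq> 0\<^sub>v r \<and> transpose_mat A *\<^sub>v c = 0\<^sub>v n"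
proof -
  define M where "M = mat (Suc k) (Suc k) (\<lambda>(j,i). if j < n then A $$ (i,j) else (0::complex))"
  have Mc: "M \<in> carrier_mat (Suc k) (Suc k)" unfolding M_def by auto
  have "M = mat\<^sub>r (Suc k) (Suc k) (\<lambda>j. if j = k then 0\<^sub>v (Suc k) else row M j)"
    by (rule eq_matI) (use z in \<open>auto simp: M_def\<close>)
  moreover have "det (mat\<^sub>r (Suc k) (Suc k) (\<lambda>j. if j = k then 0\<^sub>v (Suc k) else row M j)) = 0"
    by (rule det_row_0) (auto simp: M_def)
  ultimately have "det M = 0" by simp
  then obtain c' where c': "c' \<in> carrier_vec (Suc k)" "c' \<noteq> 0\<^sub>v (Suc k)" "M *\<^sub>v c' = 0\<^sub>v (Suc k)"
    using det_0_iff_vec_prod_zero[OF Mc] by blast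
  obtain i0 where i0: "i0 < Suc k" "c' $ i0 \<noteq> 0"
    using c'(1,2) by (metis eq_vecI carrier_vecD index_zero_vec(1,2))
  define c where "c = vec r (\<lambda>i. if i \<le> k then c' $ i else 0)"
  have cc: "c \<in> carrier_vec r" unfolding c_def by auto
  have cn: "c \<noteq> 0\<^sub>v r"
  proof
    assume "c = 0\<^sub>v r"
    then have "c $ i0 = 0" using i0 k by auto
    then show False using i0 k unfolding c_def by auto
  qed
  have "transpose_mat A *\<^sub>v c = 0\<^sub>v n"
  proof (rule eq_vecI)
    show "dim_vec (transpose_mat A *\<^sub>v c) = dim_vec (0\<^sub>v n)" using A by auto
    fix j assume j: "j < dim_vec (0\<^sub>v n)"
    then have j: "j < n" by auto
    have "(transpose_mat A *\<^sub>v c) $ j = (\<Sum>i<r. transpose_mat A $$ (j,i) * c $ i)"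
      by (rule mv_entry) (use A cc j in auto)
    also have "\<dots> = (\<Sum>i<r. A $$ (i,j) * c $ i)"
      by (rule sum.cong) (use A j in auto)
    also have "\<dots> = (\<Sum>i<Suc k. A $$ (i,j) * c' $ i)"
    proof -
      have "(\<Sum>i<r. A $$ (i,j) * c $ i) = (\<Sum>i<Suc k. A $$ (i,j) * c $ i)"
        by (rule sum.mono_neutral_right) (use k in \<open>auto simp: c_def\<close>)
      also have "\<dots> = (\<Sum>i<Suc k. A $$ (i,j) * c' $ i)"
        by (rule sum.cong) (use k in \<open>auto simp: c_def\<close>)
      finally show ?thesis .
    qed
    also have "\<dots> = 0"
    proof (cases "j < Suc k")
      case True
      have "(M *\<^sub>v c') $ j = (\<Sum>i<Suc k. M $$ (j,i) * c' $ i)"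
        by (rule mv_entry) (use Mc c' True in auto)
      also have "\<dots> = (\<Sum>i<Suc k. A $$ (i,j) * c' $ i)"
        by (rule sum.cong) (use True j in \<open>auto simp: M_def\<close>)
      finally show ?thesis using c'(3) True by auto
    next
      case False
      then show ?thesis using z j by (intro sum.neutral) auto
    qed
    finally show "(transpose_mat A *\<^sub>v c) $ j = 0\<^sub>v n $ j" using j by simp
  qed
  then show ?thesis using cc cn by blast
qed

lemma sorted_split:
  assumes "sorted_wrt (\<ge>) (xs::nat list)"
  shows "\<exists>k\<le>length xs. (\<forall>i<k. xs ! i > 0) \<and> (\<forall>i. k \<le> i \<longrightarrow> i < length xs \<longrightarrow> xs ! i = 0)"
  using assms
proof (induction xs)
  case Nil then show ?case by auto
next
  case (Cons x xs)
  then obtain k where k: "k \<le> length xs" "\<forall>i<k. xs ! i > 0" "\<forall>i. k \<le> i \<longrightarrow> i < length xs \<longrightarrow> xs ! i = 0"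
    by auto
  show ?case
  proof (cases "x = 0")
    case True
    then have "\<forall>y\<in>set xs. y = 0" using Cons.prems by auto
    then show ?thesis using True by (intro exI[of _ 0]) (auto simp: nth_Cons split: nat.split)
  next
    case False
    show ?thesis
      by (intro exI[of _ "Suc k"]) (use k False in \<open>auto simp: nth_Cons split: nat.split\<close>)
  qed
qed

lemma sum_le_eq:
  fixes f g :: "nat \<Rightarrow> nat"
  assumes "\<forall>i<r. f i \<le> g i" "(\<Sum>i<r. f i) = (\<Sum>i<r. g i)" "i < r"
  shows "f i = g i"
proof (rule ccontr)
  assume "f i \<noteq> g i"
  then have "f i < g i" using assms by force
  then have "(\<Sum>i<r. f i) < (\<Sum>i<r. g i)"
    using assms(1,3) by (intro sum_strict_mono_ex1) auto
  then show False using assms(2) by simp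
qed

lemma Delta_carrier[simp]: "Delta lam0 ms k z \<in> carrier_mat k k"
  by (simp add: Delta_def)

lemma Delta_inv_carrier[simp]: "Delta_inv lam0 ms k z \<in> carrier_mat k k"
  by (simp add: Delta_inv_def)

lemma Dinv_left:
  assumes "X \<in> carrier_mat k c" "a < k" "b < c"
  shows "(Delta_inv lam0 ms k z * X) $$ (a,b) = X $$ (a,b) / (z - lam0) ^ (ms ! a)"
proof -
  have "(Delta_inv lam0 ms k z * X) $$ (a,b) = (\<Sum>j<k. Delta_inv lam0 ms k z $$ (a,j) * X $$ (j,b))"
    by (rule mult_entry) (use assms in auto)
  also have "\<dots> = (\<Sum>j<k. if j = a then X $$ (a,b) / (z - lam0) ^ (ms ! a) else 0)"
    by (rule sum.cong) (use assms in \<open>auto simp: Delta_inv_def\<close>)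
  also have "\<dots> = X $$ (a,b) / (z - lam0) ^ (ms ! a)" using assms by simp
  finally show ?thesis .
qed

lemma D_left:
  assumes "X \<in> carrier_mat k c" "a < k" "b < c"
  shows "(Delta lam0 ms k z * X) $$ (a,b) = (z - lam0) ^ (ms ! a) * X $$ (a,b)"
proof -
  have "(Delta lam0 ms k z * X) $$ (a,b) = (\<Sum>j<k. Delta lam0 ms k z $$ (a,j) * X $$ (j,b))"
    by (rule mult_entry) (use assms in auto)
  also have "\<dots> = (\<Sum>j<k. if j = a then (z - lam0) ^ (ms ! a) * X $$ (a,b) else 0)"
    by (rule sum.cong) (use assms in \<open>auto simp: Delta_def\<close>)
  also have "\<dots> = (z - lam0) ^ (ms ! a) * X $$ (a,b)" using assms by simp
  finally show ?thesis .
qed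

lemma D_right:
  assumes "X \<in> carrier_mat c k" "a < c" "b < k"
  shows "(X * Delta lam0 ms k z) $$ (a,b) = X $$ (a,b) * (z - lam0) ^ (ms ! b)"
proof -
  have "(X * Delta lam0 ms k z) $$ (a,b) = (\<Sum>j<k. X $$ (a,j) * Delta lam0 ms k z $$ (j,b))"
    by (rule mult_entry) (use assms in auto)
  also have "\<dots> = (\<Sum>j<k. if j = b then X $$ (a,b) * (z - lam0) ^ (ms ! b) else 0)"
    by (rule sum.cong) (use assms in \<open>auto simp: Delta_def\<close>)
  also have "\<dots> = X $$ (a,b) * (z - lam0) ^ (ms ! b)" using assms by simp
  finally show ?thesis .
qed

lemma Dinv_D: "z \<noteq> lam0 \<Longrightarrow> Delta_inv lam0 ms k z * Delta lam0 ms k z = 1\<^sub>m k"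
proof (rule eq_matI)
  fix i j assume "z \<noteq> lam0" "i < dim_row (1\<^sub>m k)" "j < dim_col (1\<^sub>m k)"
  then show "(Delta_inv lam0 ms k z * Delta lam0 ms k z) $$ (i, j) = 1\<^sub>m k $$ (i, j)"
    using Dinv_left[of "Delta lam0 ms k z" k k i j] by (auto simp: Delta_def)
qed (auto simp: Delta_inv_def Delta_def)

lemma det_conj:
  assumes "z \<noteq> lam0" "A \<in> carrier_mat k k"
  shows "det (Delta_inv lam0 ms k z * A * Delta lam0 ms k z) = det A"
proof -
  have "det (Delta_inv lam0 ms k z * A * Delta lam0 ms k z)
      = det (Delta_inv lam0 ms k z) * det A * det (Delta lam0 ms k z)"
    using assms det_mult[of "Delta_inv lam0 ms k z" k A] det_mult[of "Delta_inv lam0 ms k z * A" k "Delta lam0 ms k z"]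
    by (simp add: mult_carrier_mat[of _ k k A k])
  also have "\<dots> = det A * det (Delta_inv lam0 ms k z * Delta lam0 ms k z)"
 using det_mult[of "Delta_inv lam0 ms k z" k "Delta lam0 ms k z"] by simp
  also have "\<dots> = det A" using Dinv_D[OF assms(1)] by simp
  finally show ?thesis .
qed

lemma transpose_Delta: "transpose_mat (Delta lam0 ms k z) = Delta lam0 ms k z"
  by (rule eq_matI) (auto simp: Delta_def)

lemma transpose_Delta_inv: "transpose_mat (Delta_inv lam0 ms k z) = Delta_inv lam0 ms k z"
  by (rule eq_matI) (auto simp: Delta_inv_def)

lemma assoc1:
  fixes A B C D E :: "complex mat"
  assumes A: "A \<in> carrier_mat a n" and B: "B \<in> carrier_mat n n" and C: "C \<in> carrier_mat n n"
    and D: "D \<in> carrier_mat n n" and E: "E \<in> carrier_mat n n" and BC: "B * C = 1\<^sub>m n"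
  shows "A * B * (C * D * E) = A * D * E"
proof -
  have CD: "C * D \<in> carrier_mat n n" using C D by (meson mult_carrier_mat)
  have CDE: "C * D * E \<in> carrier_mat n n" using CD E by (meson mult_carrier_mat)
  have "A * B * (C * D * E) = A * (B * (C * D * E))" using assoc_mult_mat[OF A B CDE] .
  also have "B * (C * D * E) = B * (C * D) * E" using assoc_mult_mat[OF B CD E] by simp
  also have "B * (C * D) = B * C * D" using assoc_mult_mat[OF B C D] by simp
  also have "\<dots> = D" using BC D by simp
  also have "A * (D * E) = A * D * E" using assoc_mult_mat[OF A D E] by simp
  finally show ?thesis .
qed

lemma assoc3:
  fixes A B D E F :: "complex mat"
  assumes A: "A \<in> carrier_mat a n" and B: "B \<in> carrier_mat n n" and E: "E \<in> carrier_mat n n"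
    and F: "F \<in> carrier_mat n n" and D: "D \<in> carrier_mat n b" and EF: "E * F = 1\<^sub>m n"
  shows "A * B * E * (F * D) = A * B * D"
proof -
  have AB: "A * B \<in> carrier_mat a n" using A B by simp
  have FD: "F * D \<in> carrier_mat n b" using F D by (meson mult_carrier_mat)
  have "A * B * E * (F * D) = A * B * (E * (F * D))" using assoc_mult_mat[OF AB E FD] .
  also have "E * (F * D) = E * F * D" using assoc_mult_mat[OF E F D] by simp
  also have "\<dots> = D" using EF D by simp
  finally show ?thesis .
qed

lemma core:
  fixes \<Omega> :: "complex set" and lam0 :: complex and n r :: nat
    and T V Y P Q :: "complex \<Rightarrow> complex mat" and ms :: "nat list"
  assumes Om: "open \<Omega>" "lam0 \<in> \<Omega>" and Th: "mat_holo \<Omega> n n T"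
    and msl: "length ms = n" and mss: "sorted_wrt (\<ge>) ms" and rn: "r \<le> n"
    and m0: "\<forall>i. r \<le> i \<longrightarrow> i < n \<longrightarrow> ms ! i = 0"
    and P: "unimodular0 lam0 n P" and Q: "unimodular0 lam0 n Q"
    and PTQ: "\<exists>U. open U \<and> lam0 \<in> U \<and> (\<forall>z\<in>U \<inter> \<Omega>. P z * T z * Q z = Delta lam0 ms n z)"
    and LC: "left_canonical \<Omega> n T lam0 ms r V" and RC: "right_canonical \<Omega> n T lam0 ms r Y"
  shows "\<exists>W. unimodular0 lam0 r W \<and> (\<exists>U. open U \<and> lam0 \<in> U \<and>
            (\<forall>z\<in>U \<inter> \<Omega> - {lam0}. W z = Delta_inv lam0 ms r z * (V z * T z * Y z)))"
proof -
  obtain UP P' where UP: "open UP" "lam0 \<in> UP" "mat_holo UP n n P" "mat_holo UP n n P'"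
     and PP': "\<forall>z\<in>UP. P z * P' z = 1\<^sub>m n \<and> P' z * P z = 1\<^sub>m n"
    using P unfolding unimodular0_def by blast
  obtain UQ Q' where UQ: "open UQ" "lam0 \<in> UQ" "mat_holo UQ n n Q" "mat_holo UQ n n Q'"
     and QQ': "\<forall>z\<in>UQ. Q z * Q' z = 1\<^sub>m n \<and> Q' z * Q z = 1\<^sub>m n"
    using Q unfolding unimodular0_def by blast
  obtain U0 where U0: "open U0" "lam0 \<in> U0" "\<forall>z\<in>U0 \<inter> \<Omega>. P z * T z * Q z = Delta lam0 ms n z"
    using PTQ by blast
  have Vh: "mat_holo \<Omega> r n V" and Vroot: "\<forall>i<r. left_root_function \<Omega> n T lam0 (\<lambda>z. row (V z) i)"
   and Vind: "\<forall>c \<in> carrier_vec r. transpose_mat (V lam0) *\<^sub>v c = 0\<^sub>v n \<longrightarrow> c = 0\<^sub>v r"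
    using LC unfolding left_canonical_def by auto
  obtain nus where nusl: "length nus = r"
    and nusm: "\<forall>i<r. left_root_mult \<Omega> n T lam0 (\<lambda>z. row (V z) i) (nus ! i)"
    and nussum: "(\<Sum>i<r. nus ! i) = (\<Sum>i<r. ms ! i)" and nuss: "sorted_wrt (\<ge>) nus"
    using LC unfolding left_canonical_def by auto
  have Yh: "mat_holo \<Omega> n r Y" and Yroot: "\<forall>i<r. root_function \<Omega> n T lam0 (\<lambda>z. col (Y z) i)"
    and Yind: "\<forall>c \<in> carrier_vec r. Y lam0 *\<^sub>v c = 0\<^sub>v n \<longrightarrow> c = 0\<^sub>v r"
    using RC unfolding right_canonical_def by auto
  have "\<forall>i. \<exists>U g. i < r \<longrightarrow> (open U \<and> lam0 \<in> U \<and> U \<subseteq> \<Omega> \<and> vec_holo U n g \<and> g lam0 \<noteq> 0\<^sub>v n \<and>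
       (\<forall>z\<in>U. transpose_mat (T z) *\<^sub>v row (V z) i = ((z - lam0) ^ (nus!i)) \<cdot>\<^sub>v g z))"
    using nusm unfolding left_root_mult_def zero_order_def by blast
  then obtain UV gV where UV: "\<And>i. i<r \<Longrightarrow> open (UV i) \<and> lam0 \<in> UV i \<and> UV i \<subseteq> \<Omega> \<and>
       vec_holo (UV i) n (gV i) \<and> gV i lam0 \<noteq> 0\<^sub>v n \<and>
       (\<forall>z\<in>UV i. transpose_mat (T z) *\<^sub>v row (V z) i = ((z - lam0) ^ (nus!i)) \<cdot>\<^sub>v gV i z)"
    by metis
  define S where "S = \<Omega> \<inter> UP \<inter> UQ \<inter> U0 \<inter> (\<Inter>i\<in>{..<r}. UV i)"
  have oS: "open S" unfolding S_def using Om UP UQ U0 UV by (intro open_Int open_INT) auto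
  have lS: "lam0 \<in> S" unfolding S_def using Om UP UQ U0 UV by auto
  have SO: "S \<subseteq> \<Omega>" "S \<subseteq> UP" "S \<subseteq> UQ" "S \<subseteq> U0" "\<And>i. i < r \<Longrightarrow> S \<subseteq> UV i"
    unfolding S_def by auto
  have Th': "mat_holo S n n T" using mat_holo_subset[OF Th SO(1)] .
  have Vh': "mat_holo S r n V" using mat_holo_subset[OF Vh SO(1)] .
  have Yh': "mat_holo S n r Y" using mat_holo_subset[OF Yh SO(1)] .
  have Ph': "mat_holo S n n P" "mat_holo S n n P'" using mat_holo_subset UP SO(2) by blast+
  have Qh': "mat_holo S n n Q" "mat_holo S n n Q'" using mat_holo_subset UQ SO(3) by blast+
  have Tc: "\<And>z. z \<in> S \<Longrightarrow> T z \<in> carrier_mat n n" using Th' unfolding mat_holo_def by auto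
  have Vc: "\<And>z. z \<in> S \<Longrightarrow> V z \<in> carrier_mat r n" using Vh' unfolding mat_holo_def by auto
  have Yc: "\<And>z. z \<in> S \<Longrightarrow> Y z \<in> carrier_mat n r" using Yh' unfolding mat_holo_def by auto
  have Pc: "\<And>z. z \<in> S \<Longrightarrow> P z \<in> carrier_mat n n" "\<And>z. z \<in> S \<Longrightarrow> P' z \<in> carrier_mat n n"
    using Ph' unfolding mat_holo_def by auto
  have Qc: "\<And>z. z \<in> S \<Longrightarrow> Q z \<in> carrier_mat n n" "\<And>z. z \<in> S \<Longrightarrow> Q' z \<in> carrier_mat n n"
    using Qh' unfolding mat_holo_def by auto
  have PP'S: "\<And>z. z \<in> S \<Longrightarrow> P z * P' z = 1\<^sub>m n \<and> P' z * P z = 1\<^sub>m n" using PP' SO by auto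
  have QQ'S: "\<And>z. z \<in> S \<Longrightarrow> Q z * Q' z = 1\<^sub>m n \<and> Q' z * Q z = 1\<^sub>m n" using QQ' SO by auto
  have DS: "\<And>z. z \<in> S \<Longrightarrow> P z * T z * Q z = Delta lam0 ms n z" using U0 SO by auto
  have gc: "\<And>i z. i < r \<Longrightarrow> z \<in> S \<Longrightarrow> gV i z \<in> carrier_vec n"
    using UV SO unfolding vec_holo_def by blast
  have gh: "\<And>i k. i < r \<Longrightarrow> k < n \<Longrightarrow> (\<lambda>z. gV i z $ k) holomorphic_on S"
    using UV SO unfolding vec_holo_def by (meson holomorphic_on_subset)
  have VT: "\<And>z i j. z \<in> S \<Longrightarrow> i < r \<Longrightarrow> j < n \<Longrightarrow>
       (V z * T z) $$ (i,j) = (z - lam0)^(nus!i) * gV i z $ j"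
  proof -
    fix z i j assume z: "z \<in> S" and i: "i < r" and j: "j < n"
    have zi: "z \<in> UV i" using z SO(5)[OF i] by auto
    have "(V z * T z) $$ (i,j) = (\<Sum>k<n. V z $$ (i,k) * T z $$ (k,j))"
      by (rule mult_entry) (use Vc Tc z i j in auto)
    also have "\<dots> = (transpose_mat (T z) *\<^sub>v row (V z) i) $ j"
      by (subst mv_entry[of _ n n]) (use Vc[OF z] Tc[OF z] i j in \<open>auto simp: mult.commute intro!: sum.cong\<close>)
    also have "\<dots> = (z - lam0)^(nus!i) * gV i z $ j" using UV[OF i] zi gc[OF i z] j by auto
    finally show "(V z * T z) $$ (i,j) = (z - lam0)^(nus!i) * gV i z $ j" .
  qed

  define h where "h i j z = (\<Sum>k<n. gV i z $ k * Q z $$ (k,j))" for i j z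
  have hh: "\<And>i j. i < r \<Longrightarrow> j < n \<Longrightarrow> (h i j) holomorphic_on S"
  proof -
    fix i j assume i: "i<r" and j: "j<n"
    have "(\<lambda>z. \<Sum>k<n. gV i z $ k * Q z $$ (k,j)) holomorphic_on S"
      using gh[OF i] Qh'(1) j unfolding mat_holo_def by (intro holomorphic_intros) auto
    then show "h i j holomorphic_on S" unfolding h_def[abs_def] .
  qed
  define Vt where "Vt z = V z * P' z" for z
  have Vth: "mat_holo S r n Vt" unfolding Vt_def[abs_def] by (rule mat_holo_mult[OF Vh' Ph'(2)])
  have Vtc: "\<And>z. z \<in> S \<Longrightarrow> Vt z \<in> carrier_mat r n" using Vth unfolding mat_holo_def by auto
  have Vthe: "\<And>i j. i < r \<Longrightarrow> j < n \<Longrightarrow> (\<lambda>z. Vt z $$ (i,j)) holomorphic_on S"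
    using Vth unfolding mat_holo_def by auto
  have VTQ: "\<And>z i j. z \<in> S \<Longrightarrow> i < r \<Longrightarrow> j < n \<Longrightarrow>
       (V z * T z * Q z) $$ (i,j) = (z - lam0)^(nus!i) * h i j z"
  proof -
    fix z i j assume z: "z \<in> S" and i: "i < r" and j: "j < n"
    have VTc: "V z * T z \<in> carrier_mat r n" using Vc[OF z] Tc[OF z] by (meson mult_carrier_mat)
    have "(V z * T z * Q z) $$ (i,j) = (\<Sum>k<n. (V z * T z) $$ (i,k) * Q z $$ (k,j))"
      by (rule mult_entry) (use VTc Qc z i j in auto)
    also have "\<dots> = (\<Sum>k<n. (z - lam0)^(nus!i) * (gV i z $ k * Q z $$ (k,j)))"
      by (rule sum.cong) (use VT z i in auto)
    also have "\<dots> = (z - lam0)^(nus!i) * h i j z" unfolding h_def by (simp add: sum_distrib_left)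
    finally show "(V z * T z * Q z) $$ (i,j) = (z - lam0)^(nus!i) * h i j z" .
  qed
  have F1: "\<And>z i j. z \<in> S \<Longrightarrow> i < r \<Longrightarrow> j < n \<Longrightarrow>
       Vt z $$ (i,j) * (z - lam0)^(ms!j) = (z - lam0)^(nus!i) * h i j z"
  proof -
    fix z i j assume z: "z \<in> S" and i: "i < r" and j: "j < n"
    have "Vt z * Delta lam0 ms n z = V z * P' z * (P z * T z * Q z)" unfolding Vt_def DS[OF z] ..
    also have "\<dots> = V z * T z * Q z"
      by (rule assoc1) (use Vc Pc Tc Qc PP'S z in auto)
    finally have e: "Vt z * Delta lam0 ms n z = V z * T z * Q z" .
    have "Vt z $$ (i,j) * (z - lam0)^(ms!j) = (Vt z * Delta lam0 ms n z) $$ (i,j)"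
      using D_right[OF Vtc[OF z] i j] by simp
    then show "Vt z $$ (i,j) * (z - lam0)^(ms!j) = (z - lam0)^(nus!i) * h i j z"
      using e VTQ[OF z i j] by simp
  qed
  have nupos: "\<And>i. i < r \<Longrightarrow> nus ! i > 0"
  proof (rule ccontr)
    fix i assume i: "i < r" and "\<not> nus ! i > 0"
    then have n0: "nus ! i = 0" by simp
    have l: "lam0 \<in> UV i" using UV[OF i] by auto
    have "transpose_mat (T lam0) *\<^sub>v row (V lam0) i = gV i lam0"
      using UV[OF i] l n0 by auto
    moreover have "transpose_mat (T lam0) *\<^sub>v row (V lam0) i = 0\<^sub>v n"
      using Vroot i unfolding left_root_function_def by auto
    ultimately show False using UV[OF i] by auto
  qed
  have van: "\<And>i j. i < r \<Longrightarrow> j < n \<Longrightarrow> ms!j < nus!i \<Longrightarrow> Vt lam0 $$ (i,j) = 0"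
  proof -
    fix i j assume i: "i < r" and j: "j < n" and lt: "ms!j < nus!i"
    have "Vt lam0 $$ (i,j) = (lam0 - lam0)^(nus!i - ms!j) * h i j lam0"
    proof (rule eq_at_point[OF oS lS, where f = "\<lambda>z. Vt z $$ (i,j)" and g = "\<lambda>z. (z - lam0)^(nus!i - ms!j) * h i j z"])
      show "continuous_on S (\<lambda>z. Vt z $$ (i, j))"
        using Vthe[OF i j] holomorphic_on_imp_continuous_on by blast
      have "(\<lambda>z. (z - lam0)^(nus!i - ms!j) * h i j z) holomorphic_on S"
        using hh[OF i j] by (intro holomorphic_intros)
      then show "continuous_on S (\<lambda>z. (z - lam0)^(nus!i - ms!j) * h i j z)"
        using holomorphic_on_imp_continuous_on by blast
      show "\<forall>z\<in>S - {lam0}. Vt z $$ (i, j) = (z - lam0) ^ (nus ! i - ms ! j) * h i j z"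
      proof
        fix z assume z: "z \<in> S - {lam0}"
        then have nz: "(z - lam0) ^ (ms!j) \<noteq> 0" by auto
        have "(z - lam0)^(nus!i) = (z - lam0)^(ms!j) * (z - lam0)^(nus!i - ms!j)"
          using lt by (simp add: power_add[symmetric])
        then have "Vt z $$ (i,j) * (z - lam0)^(ms!j) = (z - lam0)^(ms!j) * ((z - lam0)^(nus!i - ms!j) * h i j z)"
          using F1[of z i j] z i j by simp
        then show "Vt z $$ (i, j) = (z - lam0) ^ (nus ! i - ms ! j) * h i j z"
          using nz z by (auto simp: mult.commute)
      qed
    qed
    then show "Vt lam0 $$ (i,j) = 0" using lt by simp
  qed
  have Vtind: "\<And>c. c \<in> carrier_vec r \<Longrightarrow> transpose_mat (Vt lam0) *\<^sub>v c = 0\<^sub>v n \<Longrightarrow> c = 0\<^sub>v r"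
  proof -
    fix c :: "complex vec" assume c: "c \<in> carrier_vec r" and h0: "transpose_mat (Vt lam0) *\<^sub>v c = 0\<^sub>v n"
    have Vl: "V lam0 \<in> carrier_mat r n" "P lam0 \<in> carrier_mat n n" "P' lam0 \<in> carrier_mat n n"
      using Vc Pc lS by auto
    have tPP: "transpose_mat (P lam0) * transpose_mat (P' lam0) = 1\<^sub>m n"
      using transpose_mult[OF Vl(3) Vl(2)] PP'S[OF lS] by simp
    have tV: "transpose_mat (Vt lam0) = transpose_mat (P' lam0) * transpose_mat (V lam0)"
      unfolding Vt_def using transpose_mult[OF Vl(1) Vl(3)] .
    have vc: "transpose_mat (V lam0) *\<^sub>v c \<in> carrier_vec n" using Vl c by auto
    have "transpose_mat (V lam0) *\<^sub>v c = (transpose_mat (P lam0) * transpose_mat (P' lam0)) *\<^sub>v (transpose_mat (V lam0) *\<^sub>v c)"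
      using tPP vc by simp
    also have "\<dots> = transpose_mat (P lam0) *\<^sub>v (transpose_mat (P' lam0) *\<^sub>v (transpose_mat (V lam0) *\<^sub>v c))"
      using Vl vc by (simp add: assoc_mult_mat_vec[of _ n n _ n])
    also have "transpose_mat (P' lam0) *\<^sub>v (transpose_mat (V lam0) *\<^sub>v c) = transpose_mat (Vt lam0) *\<^sub>v c"
      unfolding tV using Vl c by (simp add: assoc_mult_mat_vec[of _ n n _ r])
    also have "\<dots> = 0\<^sub>v n" by (rule h0)
    also have "transpose_mat (P lam0) *\<^sub>v 0\<^sub>v n = 0\<^sub>v n" using Vl by auto
    finally show "c = 0\<^sub>v r" using Vind c by blast
  qed
  have le: "\<forall>i<r. nus!i \<le> ms!i"
  proof (rule ccontr)
    assume "\<not> (\<forall>i<r. nus!i \<le> ms!i)"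
    then obtain k where k: "k < r" "ms!k < nus!k" by auto
    have "\<exists>c\<in>carrier_vec r. c \<noteq> 0\<^sub>v r \<and> transpose_mat (Vt lam0) *\<^sub>v c = 0\<^sub>v n"
    proof (rule rank_arg[OF Vtc[OF lS] k(1)], intro allI impI)
      fix i j assume ik: "i \<le> k" and kj: "k \<le> j" and j: "j < n"
      have "ms!j \<le> ms!k"
        using kj j msl mss by (cases "k = j") (auto simp: sorted_wrt_iff_nth_less)
      moreover have "nus!k \<le> nus!i"
        using ik k nusl nuss by (cases "i = k") (auto simp: sorted_wrt_iff_nth_less)
      ultimately show "Vt lam0 $$ (i,j) = 0" using van[of i j] ik k j by auto
    qed
    then show False using Vtind by blast
  qed
  have eqnu: "\<And>i. i < r \<Longrightarrow> nus!i = ms!i"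
    using sum_le_eq[of r "\<lambda>i. nus!i" "\<lambda>i. ms!i"] le nussum by blast

  define Z where "Z z = Q' z * Y z" for z
  have Zh: "mat_holo S n r Z" unfolding Z_def[abs_def] by (rule mat_holo_mult[OF Qh'(2) Yh'])
  have Zc: "\<And>z. z \<in> S \<Longrightarrow> Z z \<in> carrier_mat n r" using Zh unfolding mat_holo_def by auto
  define H where "H z = mat r n (\<lambda>(i,j). h i j z)" for z
  have Hc: "\<And>z. H z \<in> carrier_mat r n" unfolding H_def by auto
  have Hh: "mat_holo S r n H" unfolding mat_holo_def
  proof (intro conjI allI impI ballI)
    fix i j assume i: "i < r" and j: "j < n"
    show "(\<lambda>z. H z $$ (i, j)) holomorphic_on S"
      using hh[OF i j] by (rule holomorphic_transform) (use i j in \<open>auto simp: H_def\<close>)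
  qed (use Hc in auto)
  define W where "W z = H z * Z z" for z
  have Wh: "mat_holo S r r W" unfolding W_def[abs_def] by (rule mat_holo_mult[OF Hh Zh])
  have Weq: "\<forall>z\<in>S - {lam0}. W z = Delta_inv lam0 ms r z * (V z * T z * Y z)"
  proof
    fix z assume zz: "z \<in> S - {lam0}"
    then have z: "z \<in> S" and zl: "z \<noteq> lam0" by auto
    have VTQc: "V z * T z * Q z \<in> carrier_mat r n" using Vc[OF z] Tc[OF z] Qc[OF z] by (meson mult_carrier_mat)
    have e: "V z * T z * Y z = V z * T z * Q z * Z z"
      unfolding Z_def by (rule assoc3[symmetric]) (use Vc Tc Qc Yc QQ'S z in auto)
    show "W z = Delta_inv lam0 ms r z * (V z * T z * Y z)"
    proof (rule eq_matI)
      fix a b assume a: "a < dim_row (Delta_inv lam0 ms r z * (V z * T z * Y z))"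
        and b: "b < dim_col (Delta_inv lam0 ms r z * (V z * T z * Y z))"
      have a: "a < r" and b: "b < r" using a b Yc[OF z] by (auto simp: Delta_inv_def)
      have VTYc: "V z * T z * Q z * Z z \<in> carrier_mat r r" using VTQc Zc[OF z] by (meson mult_carrier_mat)
      have "(Delta_inv lam0 ms r z * (V z * T z * Y z)) $$ (a,b) = (V z * T z * Q z * Z z) $$ (a,b) / (z - lam0)^(ms!a)"
        unfolding e by (rule Dinv_left[OF VTYc a b])
      also have "(V z * T z * Q z * Z z) $$ (a,b) = (\<Sum>j<n. (V z * T z * Q z) $$ (a,j) * Z z $$ (j,b))"
        by (rule mult_entry[OF VTQc Zc[OF z] a b])
      also have "\<dots> = (\<Sum>j<n. (z - lam0)^(ms!a) * (H z $$ (a,j) * Z z $$ (j,b)))"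
        by (rule sum.cong) (use VTQ[OF z a] eqnu[OF a] a in \<open>auto simp: H_def\<close>)
      also have "\<dots> = (z - lam0)^(ms!a) * W z $$ (a,b)"
        unfolding W_def mult_entry[OF Hc Zc[OF z] a b] by (simp add: sum_distrib_left)
      finally show "W z $$ (a,b) = (Delta_inv lam0 ms r z * (V z * T z * Y z)) $$ (a,b)"
        using zl by simp
    qed (use Yc[OF z] Zc[OF z] in \<open>auto simp: W_def H_def Delta_inv_def\<close>)
  qed

  have l: "lam0 \<in> S" by (rule lS)
  note cl = Vc[OF l] Tc[OF l] Yc[OF l] Pc(1)[OF l] Pc(2)[OF l] Qc(1)[OF l] Qc(2)[OF l] Zc[OF l] Vtc[OF l]
  have TY0: "T lam0 * Y lam0 = 0\<^sub>m n r"
  proof (rule eq_matI)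
    fix a b assume a: "a < dim_row (0\<^sub>m n r)" and b: "b < dim_col (0\<^sub>m n r)"
    then have a: "a < n" and b: "b < r" by auto
    have "T lam0 *\<^sub>v col (Y lam0) b = 0\<^sub>v n" using Yroot b unfolding root_function_def by auto
    then have "(T lam0 *\<^sub>v col (Y lam0) b) $ a = 0" using a by simp
    then show "(T lam0 * Y lam0) $$ (a, b) = 0\<^sub>m n r $$ (a, b)" using a b cl by simp
  qed (use cl in auto)
  have Zrows: "\<And>j b. r \<le> j \<Longrightarrow> j < n \<Longrightarrow> b < r \<Longrightarrow> Z lam0 $$ (j,b) = 0"
  proof -
    fix j b assume rj: "r \<le> j" and j: "j < n" and b: "b < r"
    have "Delta lam0 ms n lam0 * Z lam0 = P lam0 * T lam0 * Q lam0 * (Q' lam0 * Y lam0)"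
      unfolding Z_def DS[OF l] ..
    also have "\<dots> = P lam0 * T lam0 * Y lam0"
      by (rule assoc3) (use cl QQ'S[OF l] in auto)
    also have "\<dots> = P lam0 * (T lam0 * Y lam0)" using cl by simp
    also have "\<dots> = 0\<^sub>m n r" unfolding TY0 using cl by simp
    finally have e: "Delta lam0 ms n lam0 * Z lam0 = 0\<^sub>m n r" .
    have "(Delta lam0 ms n lam0 * Z lam0) $$ (j,b) = (lam0 - lam0)^(ms!j) * Z lam0 $$ (j,b)"
      by (rule D_left[OF cl(8) j b])
    then show "Z lam0 $$ (j,b) = 0" using e m0 rj j b by simp
  qed
  define H1 where "H1 = mat r r (\<lambda>(a,j). h a j lam0)"
  define Z1 where "Z1 = mat r r (\<lambda>(j,b). Z lam0 $$ (j,b))"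
  have H1c: "H1 \<in> carrier_mat r r" and Z1c: "Z1 \<in> carrier_mat r r" unfolding H1_def Z1_def by auto
  have WH: "W lam0 = H1 * Z1"
  proof (rule eq_matI)
    fix a b assume a: "a < dim_row (H1 * Z1)" and b: "b < dim_col (H1 * Z1)"
    then have a: "a < r" and b: "b < r" using H1c Z1c by auto
    have "W lam0 $$ (a,b) = (\<Sum>j<n. H lam0 $$ (a,j) * Z lam0 $$ (j,b))"
      unfolding W_def by (rule mult_entry[OF Hc cl(8) a b])
    also have "\<dots> = (\<Sum>j<r. H lam0 $$ (a,j) * Z lam0 $$ (j,b))"
      by (rule sum.mono_neutral_right) (use rn Zrows b in auto)
    also have "\<dots> = (H1 * Z1) $$ (a,b)"
      unfolding mult_entry[OF H1c Z1c a b] by (rule sum.cong) (use a b rn in \<open>auto simp: H1_def Z1_def H_def\<close>)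
    finally show "W lam0 $$ (a,b) = (H1 * Z1) $$ (a,b)" .
  qed (use H1c Z1c cl in \<open>auto simp: W_def H_def\<close>)
  have dZ1: "det Z1 \<noteq> 0"
  proof
    assume "det Z1 = 0"
    then obtain c where c: "c \<in> carrier_vec r" "c \<noteq> 0\<^sub>v r" "Z1 *\<^sub>v c = 0\<^sub>v r"
      using det_0_iff_vec_prod_zero[OF Z1c] by blast
    have Zc0: "Z lam0 *\<^sub>v c = 0\<^sub>v n"
    proof (rule eq_vecI)
      fix j assume j: "j < dim_vec (0\<^sub>v n)"
      then have j: "j < n" by simp
      have "(Z lam0 *\<^sub>v c) $ j = (\<Sum>b<r. Z lam0 $$ (j,b) * c $ b)" by (rule mv_entry[OF cl(8) c(1) j])
      also have "\<dots> = 0"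
      proof (cases "j < r")
        case True
        have "(Z1 *\<^sub>v c) $ j = (\<Sum>b<r. Z1 $$ (j,b) * c $ b)" by (rule mv_entry[OF Z1c c(1) True])
        also have "\<dots> = (\<Sum>b<r. Z lam0 $$ (j,b) * c $ b)"
          by (rule sum.cong) (use True in \<open>auto simp: Z1_def\<close>)
        finally show ?thesis using c(3) True by simp
      next
        case False
        then show ?thesis using Zrows j by (intro sum.neutral) auto
      qed
      finally show "(Z lam0 *\<^sub>v c) $ j = 0\<^sub>v n $ j" using j by simp
    qed (use cl in auto)
    have "Y lam0 *\<^sub>v c = (Q lam0 * Q' lam0) *\<^sub>v (Y lam0 *\<^sub>v c)" using QQ'S[OF l] cl c by simp
    also have "\<dots> = Q lam0 *\<^sub>v (Q' lam0 *\<^sub>v (Y lam0 *\<^sub>v c))"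
      using cl c by (simp add: assoc_mult_mat_vec[of _ n n _ n])
    also have "Q' lam0 *\<^sub>v (Y lam0 *\<^sub>v c) = Z lam0 *\<^sub>v c"
      unfolding Z_def using cl c by (simp add: assoc_mult_mat_vec[of _ n n _ r])
    also have "Q lam0 *\<^sub>v (Z lam0 *\<^sub>v c) = 0\<^sub>v n" unfolding Zc0
      by (rule eq_vecI) (use cl in \<open>auto simp: scalar_prod_def\<close>)
    finally have "Y lam0 *\<^sub>v c = 0\<^sub>v n" .
    then show False using Yind c by blast
  qed
  define Ht where "Ht z = mat r r (\<lambda>(a,j). h a j z)" for z
  define At where "At z = mat r r (\<lambda>(a,j). Vt z $$ (a,j))" for z
  have Htc: "\<And>z. Ht z \<in> carrier_mat r r" and Atc: "\<And>z. At z \<in> carrier_mat r r"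
    unfolding Ht_def At_def by auto
  have detHt: "(\<lambda>z. det (Ht z)) holomorphic_on S"
  proof (rule holo_det[where k = r])
    show "\<forall>z\<in>S. Ht z \<in> carrier_mat r r" using Htc by auto
    show "\<forall>i<r. \<forall>j<r. (\<lambda>z. Ht z $$ (i, j)) holomorphic_on S"
    proof (intro allI impI)
      fix i j assume i: "i < r" and j: "j < r"
      show "(\<lambda>z. Ht z $$ (i, j)) holomorphic_on S"
        by (rule holomorphic_transform[OF hh[OF i]]) (use j rn i in \<open>auto simp: Ht_def\<close>)
    qed
  qed
  have detAt: "(\<lambda>z. det (At z)) holomorphic_on S"
  proof (rule holo_det[where k = r])
    show "\<forall>z\<in>S. At z \<in> carrier_mat r r" using Atc by auto
    show "\<forall>i<r. \<forall>j<r. (\<lambda>z. At z $$ (i, j)) holomorphic_on S"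
    proof (intro allI impI)
      fix i j assume i: "i < r" and j: "j < r"
      show "(\<lambda>z. At z $$ (i, j)) holomorphic_on S"
        by (rule holomorphic_transform[OF Vthe[OF i]]) (use j rn i in \<open>auto simp: At_def\<close>)
    qed
  qed
  have HtAt: "\<forall>z\<in>S - {lam0}. det (Ht z) = det (At z)"
  proof
    fix z assume zz: "z \<in> S - {lam0}"
    then have z: "z \<in> S" and zl: "z \<noteq> lam0" by auto
    have DAc: "Delta_inv lam0 ms r z * At z \<in> carrier_mat r r" using Atc by (meson Delta_inv_carrier mult_carrier_mat)
    have "Ht z = Delta_inv lam0 ms r z * At z * Delta lam0 ms r z"
    proof (rule eq_matI)
      fix a j assume a: "a < dim_row (Delta_inv lam0 ms r z * At z * Delta lam0 ms r z)"
        and j: "j < dim_col (Delta_inv lam0 ms r z * At z * Delta lam0 ms r z)"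
      then have a: "a < r" and j: "j < r" by (auto simp: Delta_def Delta_inv_def)
      have "(Delta_inv lam0 ms r z * At z * Delta lam0 ms r z) $$ (a,j)
          = (Delta_inv lam0 ms r z * At z) $$ (a,j) * (z - lam0)^(ms!j)"
        by (rule D_right[OF DAc a j])
      also have "\<dots> = Vt z $$ (a,j) * (z - lam0)^(ms!j) / (z - lam0)^(ms!a)"
        using Dinv_left[OF Atc a j, of lam0 ms z] a j by (simp add: At_def)
      also have "\<dots> = h a j z"
        using F1[OF z a] j rn eqnu[OF a] zl by simp
      finally show "Ht z $$ (a,j) = (Delta_inv lam0 ms r z * At z * Delta lam0 ms r z) $$ (a,j)"
        using a j by (simp add: Ht_def)
    qed (auto simp: Ht_def Delta_def Delta_inv_def)
    then show "det (Ht z) = det (At z)" using det_conj[OF zl Atc] by simp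
  qed
  have "det (Ht lam0) = det (At lam0)"
    by (rule eq_at_point[OF oS lS]) (use detHt detAt HtAt holomorphic_on_imp_continuous_on in auto)
  moreover have "det (At lam0) \<noteq> 0"
  proof
    assume "det (At lam0) = 0"
    then have "det (transpose_mat (At lam0)) = 0" using det_transpose[OF Atc] by simp
    then obtain c where c: "c \<in> carrier_vec r" "c \<noteq> 0\<^sub>v r" "transpose_mat (At lam0) *\<^sub>v c = 0\<^sub>v r"
      using det_0_iff_vec_prod_zero[of "transpose_mat (At lam0)" r] Atc by auto
    have "transpose_mat (Vt lam0) *\<^sub>v c = 0\<^sub>v n"
    proof (rule eq_vecI)
      fix j assume j: "j < dim_vec (0\<^sub>v n)"
      then have j: "j < n" by simp
      have tVc: "transpose_mat (Vt lam0) \<in> carrier_mat n r" using cl by auto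
      have "(transpose_mat (Vt lam0) *\<^sub>v c) $ j = (\<Sum>i<r. transpose_mat (Vt lam0) $$ (j,i) * c $ i)"
        by (rule mv_entry[OF tVc c(1) j])
      also have "\<dots> = (\<Sum>i<r. Vt lam0 $$ (i,j) * c $ i)"
        by (rule sum.cong) (use cl j in auto)
      also have "\<dots> = 0"
      proof (cases "j < r")
        case True
        have tAc: "transpose_mat (At lam0) \<in> carrier_mat r r" using Atc by auto
        have "(transpose_mat (At lam0) *\<^sub>v c) $ j = (\<Sum>i<r. transpose_mat (At lam0) $$ (j,i) * c $ i)"
          by (rule mv_entry[OF tAc c(1) True])
        also have "\<dots> = (\<Sum>i<r. Vt lam0 $$ (i,j) * c $ i)"
          by (rule sum.cong) (use True Atc in \<open>auto simp: At_def\<close>)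
        finally show ?thesis using c(3) True by simp
      next
        case False
        then have "\<And>i. i < r \<Longrightarrow> Vt lam0 $$ (i,j) = 0"
          using van j m0 nupos by auto
        then show ?thesis by (intro sum.neutral) auto
      qed
      finally show "(transpose_mat (Vt lam0) *\<^sub>v c) $ j = 0\<^sub>v n $ j" using j by simp
    qed (use cl in auto)
    then show False using Vtind c by blast
  qed
  moreover have "Ht lam0 = H1" unfolding Ht_def H1_def ..
  ultimately have dH1: "det H1 \<noteq> 0" by simp
  have "det (W lam0) \<noteq> 0" unfolding WH det_mult[OF H1c Z1c] using dH1 dZ1 by simp
  then have "unimodular0 lam0 r W" by (rule unimod_of_det[OF oS lS Wh])
  moreover have "\<forall>z\<in>S \<inter> \<Omega> - {lam0}. W z = Delta_inv lam0 ms r z * (V z * T z * Y z)"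
    using Weq by auto
  ultimately show ?thesis using oS lS by blast
qed

lemma kdim_zero: "kernel.dim k (0\<^sub>m k k :: complex mat) = k"
proof -
  have Ac: "(0\<^sub>m k k :: complex mat) \<in> carrier_mat k k" by simp
  have row: "row_echelon_form (0\<^sub>m k k :: complex mat)" unfolding row_echelon_form_def
    by (intro exI[of _ "\<lambda>_. k"] pivot_funI) auto
  interpret kernel k k "0\<^sub>m k k :: complex mat" by unfold_locales simp
  have e: "{i. i < k \<and> row (0\<^sub>m k k :: complex mat) i \<noteq> 0\<^sub>v k} = {}" by auto
  have b: "basis (set (find_base_vectors (0\<^sub>m k k :: complex mat)))" using find_base_vectors(3)[OF row Ac] .
  have c: "card (set (find_base_vectors (0\<^sub>m k k :: complex mat))) = k" using find_base_vectors(4)[OF row Ac] unfolding e by simp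
  show ?thesis using Ker.dim_basis[OF finite_set b] c by simp
qed

lemma kdim_D:
  assumes kn: "k \<le> n" and pos: "\<forall>i<k. ms ! i > 0" and z: "\<forall>i. k \<le> i \<longrightarrow> i < n \<longrightarrow> ms ! i = 0"
  shows "kernel.dim n (Delta lam0 ms n lam0) = k"
proof -
  have e: "Delta lam0 ms n lam0 = four_block_mat (0\<^sub>m k k) (0\<^sub>m k (n - k)) (0\<^sub>m (n - k) k) (1\<^sub>m (n - k))"
    by (rule eq_matI) (use kn pos z in \<open>auto simp: Delta_def\<close>)
  have "kernel.dim (k + (n - k)) (Delta lam0 ms n lam0) = kernel.dim k (0\<^sub>m k k :: complex mat) + kernel.dim (n - k) (1\<^sub>m (n - k) :: complex mat)"
    by (rule kernel_four_block_0_mat[OF e]) auto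
  then show ?thesis using kn kdim_zero[of k] kernel_one_mat(1)[of "n - k", where 'a = complex] by simp
qed

lemma mat_holo_transpose:
  assumes "mat_holo S a b M" shows "mat_holo S b a (\<lambda>z. transpose_mat (M z))"
  unfolding mat_holo_def
proof (intro conjI allI impI ballI)
  fix z assume "z \<in> S" then show "transpose_mat (M z) \<in> carrier_mat b a"
    using assms unfolding mat_holo_def by auto
next
  fix i j assume i: "i < b" and j: "j < a"
  have "(\<lambda>z. M z $$ (j,i)) holomorphic_on S" using assms i j unfolding mat_holo_def by auto
  then show "(\<lambda>z. transpose_mat (M z) $$ (i, j)) holomorphic_on S"
  proof (rule holomorphic_transform)
    fix z assume "z \<in> S"
    then have "M z \<in> carrier_mat a b" using assms unfolding mat_holo_def by auto
    then show "M z $$ (j,i) = transpose_mat (M z) $$ (i, j)" using i j by auto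
  qed
qed

lemma unimod_transpose:
  assumes "unimodular0 lam0 n M" shows "unimodular0 lam0 n (\<lambda>z. transpose_mat (M z))"
proof -
  obtain U M' where U: "open U" "lam0 \<in> U" "mat_holo U n n M" "mat_holo U n n M'"
    and inv: "\<forall>z\<in>U. M z * M' z = 1\<^sub>m n \<and> M' z * M z = 1\<^sub>m n"
    using assms unfolding unimodular0_def by blast
  have "\<forall>z\<in>U. transpose_mat (M z) * transpose_mat (M' z) = 1\<^sub>m n \<and> transpose_mat (M' z) * transpose_mat (M z) = 1\<^sub>m n"
  proof
    fix z assume z: "z \<in> U"
    have c: "M z \<in> carrier_mat n n" "M' z \<in> carrier_mat n n" using U z unfolding mat_holo_def by auto
    show "transpose_mat (M z) * transpose_mat (M' z) = 1\<^sub>m n \<and> transpose_mat (M' z) * transpose_mat (M z) = 1\<^sub>m n"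
    proof
      have "transpose_mat (M z) * transpose_mat (M' z) = transpose_mat (M' z * M z)"
        using transpose_mult[OF c(2) c(1)] by simp
      then show "transpose_mat (M z) * transpose_mat (M' z) = 1\<^sub>m n" using inv z by simp
      have "transpose_mat (M' z) * transpose_mat (M z) = transpose_mat (M z * M' z)"
        using transpose_mult[OF c(1) c(2)] by simp
      then show "transpose_mat (M' z) * transpose_mat (M z) = 1\<^sub>m n" using inv z by simp
    qed
  qed
  moreover have "mat_holo U n n (\<lambda>z. transpose_mat (M z))" "mat_holo U n n (\<lambda>z. transpose_mat (M' z))"
    using mat_holo_transpose[OF U(3)] mat_holo_transpose[OF U(4)] .
  ultimately show ?thesis unfolding unimodular0_def using U(1,2) by blast
qed

lemma vec_holo_cong: assumes "\<forall>z\<in>S. f z = g z" shows "vec_holo S n f = vec_holo S n g"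
proof -
  have "\<And>i. ((\<lambda>z. f z $ i) holomorphic_on S) = ((\<lambda>z. g z $ i) holomorphic_on S)"
    by (rule holomorphic_cong) (use assms in auto)
  moreover have "(\<forall>z\<in>S. f z \<in> carrier_vec n) = (\<forall>z\<in>S. g z \<in> carrier_vec n)" using assms by auto
  ultimately show ?thesis unfolding vec_holo_def by simp
qed

lemma zero_order_imp:
  assumes "\<forall>z\<in>\<Omega>. f z = g z" "zero_order \<Omega> n f lam0 k" shows "zero_order \<Omega> n g lam0 k"
proof -
  obtain U h where U: "open U" "lam0 \<in> U" "U \<subseteq> \<Omega>" "vec_holo U n h" "h lam0 \<noteq> 0\<^sub>v n"
    "\<forall>z\<in>U. f z = ((z - lam0) ^ k) \<cdot>\<^sub>v h z"
    using assms(2) unfolding zero_order_def by blast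
  have "\<forall>z\<in>U. g z = ((z - lam0) ^ k) \<cdot>\<^sub>v h z"
  proof
    fix z assume z: "z \<in> U"
    then have "z \<in> \<Omega>" using U(3) by blast
    then have "g z = f z" using assms(1) by simp
    then show "g z = ((z - lam0) ^ k) \<cdot>\<^sub>v h z" using U(6) z by simp
  qed
  then show ?thesis unfolding zero_order_def using U by blast
qed

lemma zero_order_cong: "(\<forall>z\<in>\<Omega>. f z = g z) \<Longrightarrow> zero_order \<Omega> n f lam0 k = zero_order \<Omega> n g lam0 k"
  using zero_order_imp[of \<Omega> f g] zero_order_imp[of \<Omega> g f] by metis

lemma left_from_right:
  assumes RC: "right_canonical \<Omega> n T lam0 ms r Y" and Th: "mat_holo \<Omega> n n T" and l: "lam0 \<in> \<Omega>"
  shows "left_canonical \<Omega> n (\<lambda>z. transpose_mat (T z)) lam0 ms r (\<lambda>z. transpose_mat (Y z))"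
proof -
  have Yh: "mat_holo \<Omega> n r Y" using RC unfolding right_canonical_def by auto
  have Yc: "\<And>z. z \<in> \<Omega> \<Longrightarrow> Y z \<in> carrier_mat n r" using Yh unfolding mat_holo_def by auto
  have rc: "\<And>i z. i < r \<Longrightarrow> z \<in> \<Omega> \<Longrightarrow> row (transpose_mat (Y z)) i = col (Y z) i"
  proof -
    fix i z assume "i < r" "z \<in> \<Omega>"
    then show "row (transpose_mat (Y z)) i = col (Y z) i" using Yc[of z] by (simp add: carrier_matD)
  qed
  have lr: "\<forall>i<r. left_root_function \<Omega> n (\<lambda>z. transpose_mat (T z)) lam0 (\<lambda>z. row (transpose_mat (Y z)) i)
        = root_function \<Omega> n T lam0 (\<lambda>z. col (Y z) i)"
  proof (intro allI impI)
    fix i assume i: "i < r"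
    have "vec_holo \<Omega> n (\<lambda>z. row (transpose_mat (Y z)) i) = vec_holo \<Omega> n (\<lambda>z. col (Y z) i)"
      by (rule vec_holo_cong) (use rc i in auto)
    then show "left_root_function \<Omega> n (\<lambda>z. transpose_mat (T z)) lam0 (\<lambda>z. row (transpose_mat (Y z)) i)
        = root_function \<Omega> n T lam0 (\<lambda>z. col (Y z) i)"
      unfolding left_root_function_def root_function_def using rc[OF i l] by simp
  qed
  have lm: "\<forall>i<r. \<forall>k. left_root_mult \<Omega> n (\<lambda>z. transpose_mat (T z)) lam0 (\<lambda>z. row (transpose_mat (Y z)) i) k
        = root_mult \<Omega> n T lam0 (\<lambda>z. col (Y z) i) k"
  proof (intro allI impI)
    fix i k assume i: "i < r"
    show "left_root_mult \<Omega> n (\<lambda>z. transpose_mat (T z)) lam0 (\<lambda>z. row (transpose_mat (Y z)) i) k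
        = root_mult \<Omega> n T lam0 (\<lambda>z. col (Y z) i) k"
      unfolding left_root_mult_def root_mult_def
      by (rule zero_order_cong) (use rc i in auto)
  qed
  show ?thesis unfolding left_canonical_def
  proof (intro conjI)
    show "mat_holo \<Omega> r n (\<lambda>z. transpose_mat (Y z))" by (rule mat_holo_transpose[OF Yh])
    show "\<forall>i<r. left_root_function \<Omega> n (\<lambda>z. transpose_mat (T z)) lam0 (\<lambda>z. row (transpose_mat (Y z)) i)"
      using lr RC unfolding right_canonical_def by simp
    show "\<forall>c\<in>carrier_vec r. transpose_mat (transpose_mat (Y lam0)) *\<^sub>v c = 0\<^sub>v n \<longrightarrow> c = 0\<^sub>v r"
      using RC unfolding right_canonical_def by simp
    show "\<exists>nus. length nus = r \<and> (\<forall>i<r. left_root_mult \<Omega> n (\<lambda>z. transpose_mat (T z)) lam0 (\<lambda>z. row (transpose_mat (Y z)) i) (nus ! i)) \<and>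
        (\<Sum>i<r. nus ! i) = (\<Sum>i<r. ms ! i) \<and> sorted_wrt (\<ge>) nus"
      using RC lm unfolding right_canonical_def by simp
  qed
qed

lemma right_from_left:
  assumes LC: "left_canonical \<Omega> n T lam0 ms r V" and Th: "mat_holo \<Omega> n n T" and l: "lam0 \<in> \<Omega>"
  shows "right_canonical \<Omega> n (\<lambda>z. transpose_mat (T z)) lam0 ms r (\<lambda>z. transpose_mat (V z))"
proof -
  have Vh: "mat_holo \<Omega> r n V" using LC unfolding left_canonical_def by auto
  have Vc: "\<And>z. z \<in> \<Omega> \<Longrightarrow> V z \<in> carrier_mat r n" using Vh unfolding mat_holo_def by auto
  have rc: "\<And>i z. i < r \<Longrightarrow> z \<in> \<Omega> \<Longrightarrow> col (transpose_mat (V z)) i = row (V z) i"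
  proof -
    fix i z assume "i < r" "z \<in> \<Omega>"
    then show "col (transpose_mat (V z)) i = row (V z) i" using Vc[of z] by (simp add: carrier_matD)
  qed
  have lr: "\<forall>i<r. root_function \<Omega> n (\<lambda>z. transpose_mat (T z)) lam0 (\<lambda>z. col (transpose_mat (V z)) i)
        = left_root_function \<Omega> n T lam0 (\<lambda>z. row (V z) i)"
  proof (intro allI impI)
    fix i assume i: "i < r"
    have "vec_holo \<Omega> n (\<lambda>z. col (transpose_mat (V z)) i) = vec_holo \<Omega> n (\<lambda>z. row (V z) i)"
      by (rule vec_holo_cong) (use rc i in auto)
    then show "root_function \<Omega> n (\<lambda>z. transpose_mat (T z)) lam0 (\<lambda>z. col (transpose_mat (V z)) i)
        = left_root_function \<Omega> n T lam0 (\<lambda>z. row (V z) i)"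
      unfolding left_root_function_def root_function_def using rc[OF i l] by simp
  qed
  have lm: "\<forall>i<r. \<forall>k. root_mult \<Omega> n (\<lambda>z. transpose_mat (T z)) lam0 (\<lambda>z. col (transpose_mat (V z)) i) k
        = left_root_mult \<Omega> n T lam0 (\<lambda>z. row (V z) i) k"
  proof (intro allI impI)
    fix i k assume i: "i < r"
    show "root_mult \<Omega> n (\<lambda>z. transpose_mat (T z)) lam0 (\<lambda>z. col (transpose_mat (V z)) i) k
        = left_root_mult \<Omega> n T lam0 (\<lambda>z. row (V z) i) k"
      unfolding left_root_mult_def root_mult_def
      by (rule zero_order_cong) (use rc i in auto)
  qed
  show ?thesis unfolding right_canonical_def
  proof (intro conjI)
    show "mat_holo \<Omega> n r (\<lambda>z. transpose_mat (V z))" by (rule mat_holo_transpose[OF Vh])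
    show "\<forall>i<r. root_function \<Omega> n (\<lambda>z. transpose_mat (T z)) lam0 (\<lambda>z. col (transpose_mat (V z)) i)"
      using lr LC unfolding left_canonical_def by simp
    show "\<forall>c\<in>carrier_vec r. transpose_mat (V lam0) *\<^sub>v c = 0\<^sub>v n \<longrightarrow> c = 0\<^sub>v r"
      using LC unfolding left_canonical_def by simp
    show "\<exists>nus. length nus = r \<and> (\<forall>i<r. root_mult \<Omega> n (\<lambda>z. transpose_mat (T z)) lam0 (\<lambda>z. col (transpose_mat (V z)) i) (nus ! i)) \<and>
        (\<Sum>i<r. nus ! i) = (\<Sum>i<r. ms ! i) \<and> sorted_wrt (\<ge>) nus"
      using LC lm unfolding left_canonical_def by simp
  qed
qed

theorem mainTheorem7:
  fixes \<Omega> :: "complex set" and lam0 :: complex and n r :: nat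
    and T V Y :: "complex \<Rightarrow> complex mat" and ms :: "nat list"
  assumes "open \<Omega>" and "lam0 \<in> \<Omega>"
    and "mat_holo \<Omega> n n T"
    and "\<not> (\<forall>z\<in>\<Omega>. det (T z) = 0)"
    and "det (T lam0) = 0"
    and "r = kernel_dim (T lam0)"
    and "partial_mults \<Omega> n T lam0 ms"
    and "left_canonical \<Omega> n T lam0 ms r V"
    and "right_canonical \<Omega> n T lam0 ms r Y"
  shows "(\<exists>W. unimodular0 lam0 r W \<and> (\<exists>U. open U \<and> lam0 \<in> U \<and>
            (\<forall>z\<in>U \<inter> \<Omega> - {lam0}. W z = Delta_inv lam0 ms r z * (V z * T z * Y z))))
       \<and> (\<exists>W. unimodular0 lam0 r W \<and> (\<exists>U. open U \<and> lam0 \<in> U \<and>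
            (\<forall>z\<in>U \<inter> \<Omega> - {lam0}. W z = (V z * T z * Y z) * Delta_inv lam0 ms r z)))"
proof -
  have msl: "length ms = n" and mss: "sorted_wrt (\<ge>) ms"
    using assms(7) unfolding partial_mults_def by auto
  obtain UL UR U1 where UL: "unimodular0 lam0 n UL" and UR: "unimodular0 lam0 n UR"
    and U1: "open U1" "lam0 \<in> U1" "\<forall>z\<in>U1 \<inter> \<Omega>. UL z * T z * UR z = Delta lam0 ms n z"
    using assms(7) unfolding partial_mults_def by blast
  obtain k where k: "k \<le> n" "\<forall>i<k. ms!i > 0" "\<forall>i. k \<le> i \<longrightarrow> i < n \<longrightarrow> ms!i = 0"
    using sorted_split[OF mss] msl by auto
  obtain UP P' where UP: "open UP" "lam0 \<in> UP" "mat_holo UP n n UL" "mat_holo UP n n P'"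
     and PP': "\<forall>z\<in>UP. UL z * P' z = 1\<^sub>m n \<and> P' z * UL z = 1\<^sub>m n"
    using UL unfolding unimodular0_def by blast
  obtain UQ Q' where UQ: "open UQ" "lam0 \<in> UQ" "mat_holo UQ n n UR" "mat_holo UQ n n Q'"
     and QQ': "\<forall>z\<in>UQ. UR z * Q' z = 1\<^sub>m n \<and> Q' z * UR z = 1\<^sub>m n"
    using UR unfolding unimodular0_def by blast
  have Tc: "\<And>z. z \<in> \<Omega> \<Longrightarrow> T z \<in> carrier_mat n n" using assms(3) unfolding mat_holo_def by auto
  have Vc: "\<And>z. z \<in> \<Omega> \<Longrightarrow> V z \<in> carrier_mat r n" using assms(8) unfolding left_canonical_def mat_holo_def by auto
  have Yc: "\<And>z. z \<in> \<Omega> \<Longrightarrow> Y z \<in> carrier_mat n r" using assms(9) unfolding right_canonical_def mat_holo_def by auto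
  have ULc: "\<And>z. z \<in> UP \<Longrightarrow> UL z \<in> carrier_mat n n" "\<And>z. z \<in> UP \<Longrightarrow> P' z \<in> carrier_mat n n"
    using UP unfolding mat_holo_def by auto
  have URc: "\<And>z. z \<in> UQ \<Longrightarrow> UR z \<in> carrier_mat n n" "\<And>z. z \<in> UQ \<Longrightarrow> Q' z \<in> carrier_mat n n"
    using UQ unfolding mat_holo_def by auto
  define D0 where "D0 = Delta lam0 ms n lam0"
  have D0c: "D0 \<in> carrier_mat n n" unfolding D0_def by simp
  note c0 = Tc[OF assms(2)] ULc[OF UP(2)] URc[OF UQ(2)]
  have eq0: "UL lam0 * T lam0 * UR lam0 = D0" using U1 assms(2) unfolding D0_def by auto
  have "1\<^sub>m n * P' lam0 * (UL lam0 * T lam0 * UR lam0) = 1\<^sub>m n * T lam0 * UR lam0"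
    by (rule assoc1) (use c0 PP' UP(2) in auto)
  then have e1: "P' lam0 * D0 = T lam0 * UR lam0" using c0 eq0 by simp
  have "P' lam0 * D0 * Q' lam0 = T lam0 * UR lam0 * Q' lam0" unfolding e1 ..
  also have "\<dots> = T lam0 * (UR lam0 * Q' lam0)" using c0 by (meson assoc_mult_mat)
  also have "\<dots> = T lam0" using QQ' UQ(2) c0 by simp
  finally have T0: "T lam0 = P' lam0 * D0 * Q' lam0" by simp
  have PDc: "P' lam0 * D0 \<in> carrier_mat n n" using c0 D0c by (meson mult_carrier_mat)
  have "r = kernel.dim n (T lam0)" unfolding assms(6) kernel_dim_def using c0 by simp
  also have "\<dots> = kernel.dim n (P' lam0 * D0)"
    unfolding T0 by (rule mat_kernel_dim_mult_eq_right[OF PDc c0(5) c0(4)]) (use QQ' UQ(2) in auto)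
  also have "\<dots> = kernel.dim n D0"
    using mat_kernel_mult_eq[OF D0c c0(3) c0(2)] PP' UP(2) by simp
  also have "\<dots> = k" unfolding D0_def by (rule kdim_D[OF k])
  finally have rk: "r = k" .
  have rn: "r \<le> n" using rk k by simp
  have m0: "\<forall>i. r \<le> i \<longrightarrow> i < n \<longrightarrow> ms ! i = 0" using rk k by simp
  define U2 where "U2 = U1 \<inter> UP \<inter> UQ"
  have U2: "open U2" "lam0 \<in> U2" unfolding U2_def using U1 UP UQ by auto
  have PTQ: "\<exists>U. open U \<and> lam0 \<in> U \<and> (\<forall>z\<in>U \<inter> \<Omega>. UL z * T z * UR z = Delta lam0 ms n z)"
    using U1 by blast
  have part1: "\<exists>W. unimodular0 lam0 r W \<and> (\<exists>U. open U \<and> lam0 \<in> U \<and>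
            (\<forall>z\<in>U \<inter> \<Omega> - {lam0}. W z = Delta_inv lam0 ms r z * (V z * T z * Y z)))"
    by (rule core[OF assms(1,2,3) msl mss rn m0 UL UR PTQ assms(8,9)])
  have PTQ': "\<exists>U. open U \<and> lam0 \<in> U \<and> (\<forall>z\<in>U \<inter> \<Omega>. transpose_mat (UR z) * transpose_mat (T z) * transpose_mat (UL z) = Delta lam0 ms n z)"
  proof (intro exI conjI ballI)
    show "open U2" "lam0 \<in> U2" using U2 by auto
    fix z assume z: "z \<in> U2 \<inter> \<Omega>"
    have c: "UL z \<in> carrier_mat n n" "T z \<in> carrier_mat n n" "UR z \<in> carrier_mat n n"
      using z ULc URc Tc unfolding U2_def by auto
    have ULT: "UL z * T z \<in> carrier_mat n n" using c by (meson mult_carrier_mat)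
    have "transpose_mat (Delta lam0 ms n z) = transpose_mat (UL z * T z * UR z)" using U1 z unfolding U2_def by auto
    also have "\<dots> = transpose_mat (UR z) * transpose_mat (UL z * T z)" by (rule transpose_mult[OF ULT c(3)])
    also have "transpose_mat (UL z * T z) = transpose_mat (T z) * transpose_mat (UL z)" by (rule transpose_mult[OF c(1,2)])
    also have "transpose_mat (UR z) * (transpose_mat (T z) * transpose_mat (UL z)) = transpose_mat (UR z) * transpose_mat (T z) * transpose_mat (UL z)"
      using c by (metis assoc_mult_mat transpose_carrier_mat)
    finally show "transpose_mat (UR z) * transpose_mat (T z) * transpose_mat (UL z) = Delta lam0 ms n z"
      using transpose_Delta by metis
  qed
  obtain W' U3 where W': "unimodular0 lam0 r W'" and U3: "open U3" "lam0 \<in> U3"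
    and W'eq: "\<forall>z\<in>U3 \<inter> \<Omega> - {lam0}. W' z = Delta_inv lam0 ms r z *
        (transpose_mat (Y z) * transpose_mat (T z) * transpose_mat (V z))"
    using core[OF assms(1,2) mat_holo_transpose[OF assms(3)] msl mss rn m0 unimod_transpose[OF UR] unimod_transpose[OF UL] PTQ'
        left_from_right[OF assms(9,3,2)] right_from_left[OF assms(8,3,2)]] by blast
  have part2: "\<exists>W. unimodular0 lam0 r W \<and> (\<exists>U. open U \<and> lam0 \<in> U \<and>
            (\<forall>z\<in>U \<inter> \<Omega> - {lam0}. W z = (V z * T z * Y z) * Delta_inv lam0 ms r z))"
  proof (intro exI conjI ballI)
    show "unimodular0 lam0 r (\<lambda>z. transpose_mat (W' z))" by (rule unimod_transpose[OF W'])
    show "open U3" "lam0 \<in> U3" using U3 by auto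
    fix z assume z: "z \<in> U3 \<inter> \<Omega> - {lam0}"
    have c: "V z \<in> carrier_mat r n" "T z \<in> carrier_mat n n" "Y z \<in> carrier_mat n r" using z Vc Tc Yc by auto
    have YT: "transpose_mat (Y z) * transpose_mat (T z) \<in> carrier_mat r n" using c by (meson mult_carrier_mat transpose_carrier_mat)
    have X: "transpose_mat (Y z) * transpose_mat (T z) * transpose_mat (V z) \<in> carrier_mat r r"
      using YT c by (meson mult_carrier_mat transpose_carrier_mat)
    have "transpose_mat (W' z) = transpose_mat (Delta_inv lam0 ms r z * (transpose_mat (Y z) * transpose_mat (T z) * transpose_mat (V z)))"
      using W'eq z by auto
    also have "\<dots> = transpose_mat (transpose_mat (Y z) * transpose_mat (T z) * transpose_mat (V z)) * transpose_mat (Delta_inv lam0 ms r z)"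
      by (rule transpose_mult[OF Delta_inv_carrier X])
    also have "transpose_mat (transpose_mat (Y z) * transpose_mat (T z) * transpose_mat (V z))
        = V z * transpose_mat (transpose_mat (Y z) * transpose_mat (T z))"
      using transpose_mult[OF YT transpose_carrier_mat[THEN iffD2, OF c(1)]] by simp
    also have "transpose_mat (transpose_mat (Y z) * transpose_mat (T z)) = T z * Y z"
      using transpose_mult[OF transpose_carrier_mat[THEN iffD2, OF c(3)] transpose_carrier_mat[THEN iffD2, OF c(2)]] by simp
    also have "V z * (T z * Y z) = V z * T z * Y z" using c by (metis assoc_mult_mat)
    finally show "transpose_mat (W' z) = V z * T z * Y z * Delta_inv lam0 ms r z"
      by (simp add: transpose_Delta_inv)
  qed
  show ?thesis using part1 part2 by blast
qed

end
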